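(* Let $G(t,z)$ and $G_n(t)$ be the EGF and row polynomials of the GKP triangle $\left[\begin{array}{cc|c}\alpha,&\beta&\gamma\\ \alpha',&\beta'&\gamma'\end{array}\right]$, and put $\mathcal A(t)=\alpha+\alpha't$, $\mathcal B(t)=(\beta+\beta't)t$, $\mathcal C(t)=\gamma+\gamma't$. (i) $G$ satisfies $[\mathcal A(t)z-1]\,\partial G/\partial z+\mathcal B(t)\,\partial G/\partial t+\mathcal C(t)\,G=0$ with $G(t,0)\equiv1$. (ii) $G_0\equiv1$ and $G_{n+1}(t)=[\mathcal A(t)n+\mathcal C(t)]G_n(t)+\mathcal B(t)G_n'(t)$ for all $n\ge0$. (iii) If $\beta\beta'\neq0$, then with $\hat\alpha=\alpha/\beta$, $\hat\alpha'=-\alpha'/\beta'$, $\hat\gamma=\gamma/\beta$, $\hat\gamma'=-\gamma'/\beta'$ and $D_t=d/dt$, for all $n\ge0$ $$\bigl[t^{1+\hat\alpha}(\beta+\beta't)^{1-\hat\alpha-\hat\alpha'}D_t\bigr]^n\frac{t^{\hat\gamma}}{(\beta+\beta't)^{\hat\gamma+\hat\gamma'}}=\frac{t^{\hat\alpha n+\hat\gamma}\,G_n(t)}{(\beta+\beta't)^{(\hat\alpha+\hat\alpha')n+\hat\gamma+\hat\gamma'}}$$ (as an identity of functions of $t$ on a domain where branches of the powers are fixed consistently).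
   Context: GKP triangle: for complex parameters $\alpha,\beta,\gamma,\alpha',\beta',\gamma'$, the array $T_{n,k}=\left[\begin{array}{cc|c}\alpha,&\beta&\gamma\\ \alpha',&\beta'&\gamma'\end{array}\right]_{n,k}$ ($n,k\in\mathbb Z$) is defined by $T_{0,0}=1$, $T_{n,k}=0$ if $n<0$, $k<0$ or $k>n$, and $T_{n+1,k+1}=[\alpha n+\beta(k+1)+\gamma]\,T_{n,k+1}+[\alpha' n+\beta' k+\gamma']\,T_{n,k}$ for all $n\ge0$ and all integers $k$. Its $n$th row polynomial is $G_n(t)=\sum_{k=0}^n T_{n,k}t^k$ and its EGF is $G(t,z)=\sum_{n\ge0}G_n(t)\,z^n/n!$. *)

theory Defs
  imports "HOL-Analysis.Analysis" "HOL-Computational_Algebra.Polynomial"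
          "HOL-Computational_Algebra.Formal_Power_Series"
begin

text \<open>GKP triangle T(n,k) with parameters a b c (alpha, beta, gamma) and
  a' b' c' (alpha', beta', gamma').  T(0,0)=1, T(n,k)=0 outside 0<=k<=n, and
  T(n+1,j) = (a n + b j + c) T(n,j) + (a' n + b' (j-1) + c') T(n,j-1)
  (this is the recurrence of the paper with j = k+1).\<close>
fun gkp :: "complex \<Rightarrow> complex \<Rightarrow> complex \<Rightarrow> complex \<Rightarrow> complex \<Rightarrow> complex
            \<Rightarrow> nat \<Rightarrow> int \<Rightarrow> complex" where
  "gkp a b c a' b' c' 0 k = (if k = 0 then 1 else 0)"
| "gkp a b c a' b' c' (Suc n) j =
     (if j < 0 \<or> j > int n + 1 then 0
      else (a * of_nat n + b * of_int j + c) * gkp a b c a' b' c' n j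
         + (a' * of_nat n + b' * of_int (j - 1) + c') * gkp a b c a' b' c' n (j - 1))"

definition gkp_row :: "complex \<Rightarrow> complex \<Rightarrow> complex \<Rightarrow> complex \<Rightarrow> complex \<Rightarrow> complex
            \<Rightarrow> nat \<Rightarrow> complex poly" where
  "gkp_row a b c a' b' c' n = (\<Sum>k\<le>n. monom (gkp a b c a' b' c' n (int k)) k)"

text \<open>EGF G(t,z) = sum_n G_n(t) z^n / n!, as a formal power series in z
  whose coefficients are polynomials in t.\<close>
definition gkp_egf :: "complex \<Rightarrow> complex \<Rightarrow> complex \<Rightarrow> complex \<Rightarrow> complex \<Rightarrow> complex
            \<Rightarrow> complex poly fps" where
  "gkp_egf a b c a' b' c' = Abs_fps (\<lambda>n. smult (1 / fact n) (gkp_row a b c a' b' c' n))"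

definition fps_pderiv_t :: "complex poly fps \<Rightarrow> complex poly fps" where
  "fps_pderiv_t F = Abs_fps (\<lambda>n. pderiv (fps_nth F n))"

end

theory Submission
  imports Defs
begin

lemma gkp_out:
  "j < 0 \<or> j > int n \<Longrightarrow> gkp a b c a' b' c' n j = 0"
  by (induction n arbitrary: j) auto

lemma coeff_row:
  "coeff (gkp_row a b c a' b' c' n) k = gkp a b c a' b' c' n (int k)"
  unfolding gkp_row_def
  by (auto simp: coeff_sum coeff_monom gkp_out)

lemma row_rec:
  "gkp_row a b c a' b' c' (Suc n) =
     (smult (of_nat n) [:a, a':] + [:c, c':]) * gkp_row a b c a' b' c' n
       + [:0, b, b':] * pderiv (gkp_row a b c a' b' c' n)"
proof (rule poly_eqI)
  fix k
  show "coeff (gkp_row a b c a' b' c' (Suc n)) k =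
    coeff ((smult (of_nat n) [:a, a':] + [:c, c':]) * gkp_row a b c a' b' c' n
       + [:0, b, b':] * pderiv (gkp_row a b c a' b' c' n)) k"
  proof (cases k)
    case 0
    then show ?thesis by (simp add: coeff_row coeff_pderiv gkp_out algebra_simps)
  next
    case (Suc m)
    then show ?thesis
      by (cases m) (auto simp: coeff_row coeff_pderiv gkp_out algebra_simps coeff_pCons split: nat.splits)
  qed
qed

lemma alg:
  fixes t u X Y Ta Ua Pv Pd p q b' :: complex
  assumes "t \<noteq> 0" "u \<noteq> 0" "X \<noteq> 0" "Y \<noteq> 0" "Ta \<noteq> 0" "Ua \<noteq> 0"
  shows "t * Ta * (u / Ua) * (((p * (X / t) * Pv + X * Pd) * Y - X * Pv * (q * (Y / u) * b')) / (Y * Y))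
     = Ta * X * ((p * u - q * b' * t) * Pv + t * u * Pd) / (Ua * Y)"
  using assms by (simp add: field_simps)

lemma step:
  fixes a b c a' b' c' t :: complex and P :: "complex poly" and n :: nat
  assumes bb: "b \<noteq> 0" "b' \<noteq> 0" and tS: "t \<notin> \<real>\<^sub>\<le>\<^sub>0" and uS: "b + b' * t \<notin> \<real>\<^sub>\<le>\<^sub>0"
  defines "ah \<equiv> a / b" and "ah' \<equiv> - a' / b'" and "ch \<equiv> c / b" and "ch' \<equiv> - c' / b'"
  shows "t powr (1 + ah) * (b + b' * t) powr (1 - ah - ah') *
           deriv (\<lambda>t. t powr (ah * of_nat n + ch) * poly P t
                / (b + b' * t) powr ((ah + ah') * of_nat n + ch + ch')) t
       = t powr (ah * of_nat (Suc n) + ch)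
          * poly ((smult (of_nat n) [:a, a':] + [:c, c':]) * P + [:0, b, b':] * pderiv P) t
          / (b + b' * t) powr ((ah + ah') * of_nat (Suc n) + ch + ch')"
proof -
  define p where "p = ah * of_nat n + ch"
  define q where "q = (ah + ah') * of_nat n + ch + ch'"
  define u where "u = b + b' * t"
  have t0: "t \<noteq> 0" using tS by auto
  have u0: "u \<noteq> 0" using uS u_def by auto
  have D: "((\<lambda>t. t powr p * poly P t / (b + b' * t) powr q) has_field_derivative
     ((p * t powr (p - 1) * poly P t + t powr p * poly (pderiv P) t) * u powr q
       - t powr p * poly P t * (q * u powr (q - 1) * b')) / (u powr q * u powr q)) (at t)"
    unfolding u_def
    by (rule derivative_eq_intros has_field_derivative_powr tS uS refl | simp add: u0[unfolded u_def])+
  have dv: "deriv (\<lambda>t. t powr p * poly P t / (b + b' * t) powr q) t =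
     ((p * t powr (p - 1) * poly P t + t powr p * poly (pderiv P) t) * u powr q
       - t powr p * poly P t * (q * u powr (q - 1) * b')) / (u powr q * u powr q)"
    using D by (rule DERIV_imp_deriv)
  have e1: "t powr (p - 1) = t powr p / t" by (simp add: powr_diff)
  have e2: "u powr (q - 1) = u powr q / u" by (simp add: powr_diff)
  have e3: "t powr (1 + ah) = t * t powr ah" by (simp add: powr_add)
  have e4: "u powr (1 - ah - ah') = u / u powr (ah + ah')"
    using powr_diff[of u 1 "ah + ah'"] by (simp add: diff_diff_eq)
  have e5: "t powr (ah * of_nat (Suc n) + ch) = t powr ah * t powr p"
    by (simp add: p_def powr_add[symmetric] algebra_simps)
  have e6: "u powr ((ah + ah') * of_nat (Suc n) + ch + ch') = u powr (ah + ah') * u powr q"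
    by (simp add: q_def powr_add[symmetric] algebra_simps)
  have key: "p * u - q * b' * t = (a * of_nat n + c) + (a' * of_nat n + c') * t"
    unfolding p_def q_def u_def ah_def ah'_def ch_def ch'_def using bb
    by (simp add: field_simps)
  have pe: "poly ((smult (of_nat n) [:a, a':] + [:c, c':]) * P + [:0, b, b':] * pderiv P) t
     = ((a * of_nat n + c) + (a' * of_nat n + c') * t) * poly P t + t * u * poly (pderiv P) t"
    by (simp add: algebra_simps u_def)
  have nz: "t powr p \<noteq> 0" "u powr q \<noteq> 0" "t powr ah \<noteq> 0" "u powr (ah + ah') \<noteq> 0"
    using t0 u0 by auto
  show ?thesis
    unfolding p_def[symmetric] q_def[symmetric] u_def[symmetric] dv e1 e2 e3 e4 e5 e6 pe
    unfolding key[symmetric]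
    using alg[OF t0 u0 nz(1,2,3,4)] by simp
qed

lemma part1:
  fixes a b c a' b' c' :: complex
  defines "A \<equiv> [:a, a':]" and "B \<equiv> [:0, b, b':]" and "C \<equiv> [:c, c':]"
  defines "G \<equiv> gkp_egf a b c a' b' c'" and "Gn \<equiv> gkp_row a b c a' b' c'"
  shows "(fps_const A * fps_X - 1) * fps_deriv G + fps_const B * fps_pderiv_t G
        + fps_const C * G = 0"
proof (rule fps_ext)
  fix n
  have Gk: "fps_nth G k = smult (1 / fact k) (Gn k)" for k
    by (simp add: G_def Gn_def gkp_egf_def)
  have rr: "Gn (Suc k) = (smult (of_nat k) A + C) * Gn k + B * pderiv (Gn k)" for k
    unfolding Gn_def A_def B_def C_def by (rule row_rec)
  have ofn: "(of_nat k :: complex poly) = [:of_nat k:]" for k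
    by (simp add: of_nat_poly)
  show "fps_nth ((fps_const A * fps_X - 1) * fps_deriv G + fps_const B * fps_pderiv_t G
        + fps_const C * G) n = fps_nth 0 n"
  proof (cases n)
    case 0
    then show ?thesis
      by (simp add: algebra_simps fps_pderiv_t_def Gk rr ofn)
  next
    case (Suc m)
    have h1: "fps_nth ((fps_const A * fps_X - 1) * fps_deriv G + fps_const B * fps_pderiv_t G
        + fps_const C * G) n = A * fps_nth (fps_deriv G) m - fps_nth (fps_deriv G) n
          + B * pderiv (fps_nth G n) + C * fps_nth G n"
      using Suc by (simp add: algebra_simps fps_pderiv_t_def)
    have h2: "fps_nth (fps_deriv G) m = smult (1 / fact n) (smult (of_nat n) (Gn n))"
      using Suc by (simp add: Gk ofn field_simps)
    have h3: "fps_nth (fps_deriv G) n = smult (1 / fact n) (Gn (Suc n))"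
    proof -
      have "(of_nat (Suc n) :: complex) / fact (Suc n) = 1 / fact n"
        by (simp only: fact_Suc of_nat_mult) (simp add: field_simps del: of_nat_Suc)
      thus ?thesis by (simp add: Gk ofn del: of_nat_Suc fact_Suc)
    qed
    show ?thesis
      unfolding h1 h2 h3 rr Gk
      by (simp add: algebra_simps pderiv_smult smult_add_right)
  qed
qed

theorem mainTheorem2:
  fixes a b c a' b' c' :: complex
  defines "A \<equiv> [:a, a':]" and "B \<equiv> [:0, b, b':]" and "C \<equiv> [:c, c':]"
  defines "G \<equiv> gkp_egf a b c a' b' c'" and "Gn \<equiv> gkp_row a b c a' b' c'"
  shows
    "((fps_const A * fps_X - 1) * fps_deriv G + fps_const B * fps_pderiv_t G
        + fps_const C * G = 0 \<and> fps_nth G 0 = 1)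
   \<and> (Gn 0 = 1 \<and>
      (\<forall>n. Gn (Suc n) = (smult (of_nat n) A + C) * Gn n + B * pderiv (Gn n)))
   \<and> (b * b' \<noteq> 0 \<longrightarrow>
      (let ah = a / b; ah' = - a' / b'; ch = c / b; ch' = - c' / b';
           L = (\<lambda>f t. t powr (1 + ah) * (b + b' * t) powr (1 - ah - ah') * deriv f t);
           f0 = (\<lambda>t. t powr ch / (b + b' * t) powr (ch + ch'))
       in \<forall>n t. (Im t \<noteq> 0 \<or> Re t > 0) \<and> (Im (b + b' * t) \<noteq> 0 \<or> Re (b + b' * t) > 0) \<longrightarrow>
            (L ^^ n) f0 t =
              t powr (ah * of_nat n + ch) * poly (Gn n) t
                / (b + b' * t) powr ((ah + ah') * of_nat n + ch + ch')))"
proof -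
  have G0: "Gn 0 = 1" by (simp add: Gn_def gkp_row_def)
  have rr: "\<forall>n. Gn (Suc n) = (smult (of_nat n) A + C) * Gn n + B * pderiv (Gn n)"
    unfolding Gn_def A_def B_def C_def by (simp add: row_rec)
  have p1: "(fps_const A * fps_X - 1) * fps_deriv G + fps_const B * fps_pderiv_t G
        + fps_const C * G = 0"
    unfolding A_def B_def C_def G_def by (rule part1)
  have g0: "fps_nth G 0 = 1" by (simp add: G_def gkp_egf_def gkp_row_def)
  have p3: "(let ah = a / b; ah' = - a' / b'; ch = c / b; ch' = - c' / b';
           L = (\<lambda>f t. t powr (1 + ah) * (b + b' * t) powr (1 - ah - ah') * deriv f t);
           f0 = (\<lambda>t. t powr ch / (b + b' * t) powr (ch + ch'))
       in \<forall>n t. (Im t \<noteq> 0 \<or> Re t > 0) \<and> (Im (b + b' * t) \<noteq> 0 \<or> Re (b + b' * t) > 0) \<longrightarrow>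
            (L ^^ n) f0 t =
              t powr (ah * of_nat n + ch) * poly (Gn n) t
                / (b + b' * t) powr ((ah + ah') * of_nat n + ch + ch'))"
    if bb0: "b * b' \<noteq> 0"
  proof -
    have bb: "b \<noteq> 0" "b' \<noteq> 0" using bb0 by auto
    define ah where "ah = a / b"
    define ah' where "ah' = - a' / b'"
    define ch where "ch = c / b"
    define ch' where "ch' = - c' / b'"
    define L where "L = (\<lambda>f t. t powr (1 + ah) * (b + b' * t) powr (1 - ah - ah') * deriv f (t::complex))"
    define f0 where "f0 = (\<lambda>t. t powr ch / (b + b' * t) powr (ch + ch'))"
    define F where "F = (\<lambda>n t. t powr (ah * of_nat n + ch) * poly (Gn n) t
                / (b + b' * t) powr ((ah + ah') * of_nat n + ch + ch'))"
    define S where "S = {t. t \<notin> \<real>\<^sub>\<le>\<^sub>0 \<and> b + b' * t \<notin> \<real>\<^sub>\<le>\<^sub>0}"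
    have Seq: "t \<in> S \<longleftrightarrow> (Im t \<noteq> 0 \<or> Re t > 0) \<and> (Im (b + b' * t) \<noteq> 0 \<or> Re (b + b' * t) > 0)" for t
      unfolding S_def by (auto simp: complex_nonpos_Reals_iff)
    have oS: "open S"
    proof -
      have "S = - \<real>\<^sub>\<le>\<^sub>0 \<inter> (\<lambda>t. b + b' * t) -` (- \<real>\<^sub>\<le>\<^sub>0)"
        unfolding S_def by auto
      moreover have "open ((\<lambda>t. b + b' * t) -` (- \<real>\<^sub>\<le>\<^sub>0 :: complex set))"
        by (rule open_vimage) (auto intro!: continuous_intros)
      ultimately show ?thesis by (auto intro!: open_Int simp: open_Compl)
    qed
    have main: "\<forall>t\<in>S. (L ^^ n) f0 t = F n t" for n
    proof (induction n)
      case 0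
      then show ?case by (simp add: f0_def F_def G0)
    next
      case (Suc n)
      show ?case
      proof
        fix t assume tS: "t \<in> S"
        have ev: "eventually (\<lambda>x. (L ^^ n) f0 x = F n x) (nhds t)"
          using eventually_nhds_in_open[OF oS tS] Suc.IH
          by (auto elim!: eventually_mono)
        have "(L ^^ Suc n) f0 t = L ((L ^^ n) f0) t" by simp
        also have "\<dots> = t powr (1 + ah) * (b + b' * t) powr (1 - ah - ah') * deriv (F n) t"
          using deriv_cong_ev[OF ev refl] by (simp add: L_def)
        also have "\<dots> = F (Suc n) t"
          unfolding F_def rr[rule_format, of n] A_def C_def B_def ah_def ah'_def ch_def ch'_def
          using tS bb by (intro step) (auto simp: S_def)
        finally show "(L ^^ Suc n) f0 t = F (Suc n) t" .
      qed
    qed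
    show ?thesis
      unfolding Let_def ah_def[symmetric] ah'_def[symmetric] ch_def[symmetric] ch'_def[symmetric]
        L_def[symmetric] f0_def[symmetric]
      using main unfolding Seq[symmetric] F_def by blast
  qed
  show ?thesis using G0 rr p1 g0 p3 by blast
qed

end
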